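(* Let $T$ satisfy Condition 1 and let $U$ be a quantization of $T$ with respect to the partition $\mathcal M_\Bbbk$ of $[0,1]$ into $N_\Bbbk$ equal intervals. Let $X\subset[0,1]$ be an interval (or a finite union of intervals) such that all endpoints of $X$ and all endpoints of $T^{-1}X$ belong to the set of endpoints of the intervals of $\mathcal M_\Bbbk$. Then $$U^{-1}P_XU=P_{T^{-1}X},$$ where for a set $Y$ of this kind $P_Y=\mathrm{Op}_\Bbbk(\chi_Y)$ with $\chi_Y$ the characteristic function of $Y$.
   Context: Condition 1: $T:[0,1]\to[0,1]$, integers $\Lambda_1,\dots,\Lambda_l\geq2$ with $\sum\Lambda_j^{-1}=1$, consecutive intervals $I_1,\dots,I_l$ with $|I_j|=\Lambda_j^{-1}$, $T$ affine with slope $\Lambda_j$ on $I_j$ mapping $I_j$ onto $[0,1]$. $\mathcal M_\Bbbk$ consists of $E_i=[(i-1)/N_\Bbbk,i/N_\Bbbk]$, $i=1,\dots,N_\Bbbk$, where all endpoints of the $I_j$ are endpoints of intervals of $\mathcal M_\Bbbk$. With $B_\Bbbk(i,j)=|E_i\cap T^{-1}E_j|/|E_i|$, a quantization is a unitary $N_\Bbbk\times N_\Bbbk$ matrix $U$ with $B_\Bbbk(j,i)=|U(i,j)|^2$ for all $i,j$. $\mathrm{Op}_\Bbbk(f)$ is the diagonal matrix with $(i,i)$ entry equal to the average $N_\Bbbk\int_{E_i}f\,dx$ (so $P_Y$ is the orthogonal projection onto the coordinates $i$ with $E_i\subseteq Y$). *)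

theory Defs
  imports "HOL-Analysis.Analysis" "Jordan_Normal_Form.Schur_Decomposition"
    "Jordan_Normal_Form.Gauss_Jordan_Elimination"
begin

definition grid :: "nat \<Rightarrow> real set" where
  "grid N = {real m / real N | m. m \<le> N}"

text \<open>Partition interval E_i, 0-based: E i = [i/N, (i+1)/N], i = 0..N-1
  (the paper's E_(i+1)).\<close>
definition cell :: "nat \<Rightarrow> nat \<Rightarrow> real set" where
  "cell N i = {real i / real N .. real (Suc i) / real N}"

definition preim :: "(real \<Rightarrow> real) \<Rightarrow> real set \<Rightarrow> real set" where
  "preim T Y = {x \<in> {0..1}. T x \<in> Y}"

text \<open>Condition 1: breakpoints a 0 = 0 < a 1 < ... < a l = 1, I_j = [a j, a (j+1)],
  |I_j| = 1/Lam j, Lam j >= 2 integer, sum of 1/Lam j = 1, T affine of slope Lam j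
  on I_j mapping I_j onto [0,1] (prescribed on the interior of I_j; at the finitely many
  breakpoints T is only required to take values in [0,1]).\<close>
definition condition1 ::
  "(real \<Rightarrow> real) \<Rightarrow> nat \<Rightarrow> (nat \<Rightarrow> nat) \<Rightarrow> (nat \<Rightarrow> real) \<Rightarrow> bool" where
  "condition1 T l Lam a \<longleftrightarrow>
     (\<forall>j<l. Lam j \<ge> 2) \<and>
     (\<Sum>j<l. 1 / real (Lam j)) = 1 \<and>
     a 0 = 0 \<and> a l = 1 \<and>
     (\<forall>j<l. a (Suc j) - a j = 1 / real (Lam j)) \<and>
     (\<forall>x\<in>{0..1}. T x \<in> {0..1}) \<and>
     (\<forall>j<l. \<forall>x\<in>{a j<..<a (Suc j)}. T x = real (Lam j) * (x - a j))"

definition grid_union :: "nat \<Rightarrow> real set \<Rightarrow> bool" where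
  "grid_union N Y \<longleftrightarrow> (\<exists>F. finite F \<and> Y = \<Union>F \<and>
     (\<forall>I\<in>F. is_interval I \<and> I \<noteq> {} \<and> bounded I \<and> Inf I \<in> grid N \<and> Sup I \<in> grid N))"

definition Bmat :: "(real \<Rightarrow> real) \<Rightarrow> nat \<Rightarrow> nat \<Rightarrow> nat \<Rightarrow> real" where
  "Bmat T N i j = measure lborel (cell N i \<inter> preim T (cell N j)) / measure lborel (cell N i)"

definition Op :: "nat \<Rightarrow> (real \<Rightarrow> real) \<Rightarrow> complex mat" where
  "Op N f = mat N N (\<lambda>(i,j). if i = j then complex_of_real (real N * (\<integral>x\<in>cell N i. f x \<partial>lborel)) else 0)"

definition proj :: "nat \<Rightarrow> real set \<Rightarrow> complex mat" where
  "proj N Y = Op N (indicator Y)"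

definition unitary_mat :: "complex mat \<Rightarrow> bool" where
  "unitary_mat U \<longleftrightarrow> U * mat_adjoint U = 1\<^sub>m (dim_row U) \<and> mat_adjoint U * U = 1\<^sub>m (dim_row U)"

definition quantization :: "(real \<Rightarrow> real) \<Rightarrow> nat \<Rightarrow> complex mat \<Rightarrow> bool" where
  "quantization T N U \<longleftrightarrow> U \<in> carrier_mat N N \<and> unitary_mat U \<and>
     (\<forall>i<N. \<forall>j<N. Bmat T N j i = (cmod (U $$ (i,j)))\<^sup>2)"

end

theory Submission
  imports Defs
begin

definition oc :: "nat \<Rightarrow> nat \<Rightarrow> real set" where
  "oc N i = {real i / real N <..< real (Suc i) / real N}"

lemma interval_inner:
  fixes I :: "real set"
  assumes "is_interval I" "bounded I" "Inf I < y" "y < Sup I" and ne: "I \<noteq> {}"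
  shows "y \<in> I"
proof -
  have bb: "bdd_below I" "bdd_above I" using assms(2) bounded_imp_bdd_below bounded_imp_bdd_above by auto
  obtain u where u: "u \<in> I" "u < y" using assms(3) ne bb by (meson cInf_lessD)
  obtain v where v: "v \<in> I" "y < v" using assms(4) ne bb by (meson less_cSupD)
  show ?thesis using assms(1) u v unfolding is_interval_1 by (meson less_imp_le)
qed

lemma gu_dich:
  assumes N: "N > 0" and g: "grid_union N Y"
  shows "oc N i \<subseteq> Y \<or> oc N i \<inter> Y = {}"
proof (rule ccontr)
  assume nt: "\<not> (oc N i \<subseteq> Y \<or> oc N i \<inter> Y = {})"
  then obtain x where x: "x \<in> oc N i" "x \<in> Y" by auto
  obtain F where F: "finite F" "Y = \<Union>F"
    "\<forall>I\<in>F. is_interval I \<and> I \<noteq> {} \<and> bounded I \<and> Inf I \<in> grid N \<and> Sup I \<in> grid N"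
    using g unfolding grid_union_def by blast
  obtain I where I: "I \<in> F" "x \<in> I" using x F by auto
  have Ip: "is_interval I" "I \<noteq> {}" "bounded I" "Inf I \<in> grid N" "Sup I \<in> grid N" using F I by auto
  obtain m where m: "Inf I = real m / real N" using Ip(4) unfolding grid_def by auto
  obtain m' where m': "Sup I = real m' / real N" using Ip(5) unfolding grid_def by auto
  have bb: "bdd_below I" "bdd_above I" using Ip(3) bounded_imp_bdd_below bounded_imp_bdd_above by auto
  have "Inf I \<le> x" "x \<le> Sup I" using I bb by (auto intro: cInf_lower cSup_upper)
  have Nr: "real N > 0" using N by simp
  have "real m / real N < real (Suc i) / real N" using \<open>Inf I \<le> x\<close> x(1) m unfolding oc_def by auto
  hence "real m < real (Suc i)" using Nr by (auto simp: divide_less_cancel)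
  hence mi: "m \<le> i" by simp
  have "real i / real N < real m' / real N" using \<open>x \<le> Sup I\<close> x(1) m' unfolding oc_def by auto
  hence "real i < real m'" using Nr by (simp add: divide_less_cancel)
  hence mi': "Suc i \<le> m'" by simp
  have "oc N i \<subseteq> I"
  proof
    fix y assume y: "y \<in> oc N i"
    have "real m / real N \<le> real i / real N" using mi Nr by (simp add: divide_right_mono)
    moreover have "real (Suc i) / real N \<le> real m' / real N" using mi' Nr
      by (simp add: divide_right_mono del: of_nat_Suc)
    ultimately show "y \<in> I" using y m m' Ip unfolding oc_def
      by (intro interval_inner) auto
  qed
  hence "oc N i \<subseteq> Y" using I F by auto
  thus False using nt by auto
qed

lemma gu_borel:
  assumes g: "grid_union N Y" shows "Y \<in> sets borel"
proof -
  obtain F where F: "finite F" "Y = \<Union>F"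
    "\<forall>I\<in>F. is_interval I \<and> I \<noteq> {} \<and> bounded I \<and> Inf I \<in> grid N \<and> Sup I \<in> grid N"
    using g unfolding grid_union_def by blast
  show ?thesis unfolding F(2) using F(1,3) real_interval_borel_measurable
    by (intro sets.finite_Union) auto
qed


lemma cell_oc: "oc N i \<subseteq> cell N i" "cell N i - oc N i \<subseteq> {real i / real N, real (Suc i) / real N}"
  unfolding oc_def cell_def by auto

lemma Nmeasure_cell_inter:
  assumes N: "N > 0" and g: "grid_union N Y"
  shows "real N * measure lborel (cell N i \<inter> Y) = (if oc N i \<subseteq> Y then 1 else 0)"
proof -
  have Nr: "real N > 0" using N by simp
  have le: "real i / real N \<le> real (Suc i) / real N" using Nr by (simp add: divide_right_mono del: of_nat_Suc)
  have len: "real (Suc i) / real N - real i / real N = 1 / real N" by (simp add: add_divide_distrib)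
  have Ym: "Y \<in> sets borel" using gu_borel[OF g] by simp
  have cm: "cell N i \<in> sets borel" unfolding cell_def by simp
  show ?thesis
  proof (cases "oc N i \<subseteq> Y")
    case True
    have "emeasure lborel (cell N i \<inter> Y) \<le> emeasure lborel (cell N i)"
      by (intro emeasure_mono) (auto simp: cm)
    also have "\<dots> = ennreal (1 / real N)" unfolding cell_def using le len by simp
    finally have a: "emeasure lborel (cell N i \<inter> Y) \<le> ennreal (1 / real N)" .
    have "ennreal (1 / real N) = emeasure lborel (oc N i)" unfolding oc_def using le len by simp
    also have "\<dots> \<le> emeasure lborel (cell N i \<inter> Y)"
      using True cell_oc(1) by (intro emeasure_mono) (auto simp: cm Ym)
    finally have "emeasure lborel (cell N i \<inter> Y) = ennreal (1 / real N)" using a by (rule antisym[rotated])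
    hence "measure lborel (cell N i \<inter> Y) = 1 / real N" unfolding measure_def by simp
    thus ?thesis using True Nr by simp
  next
    case False
    hence d: "oc N i \<inter> Y = {}" using gu_dich[OF N g] by blast
    have "cell N i \<inter> Y \<subseteq> {real i / real N, real (Suc i) / real N}" using d cell_oc[of N i] by blast
    hence "countable (cell N i \<inter> Y)" by (rule countable_subset) simp
    hence "emeasure lborel (cell N i \<inter> Y) = 0" by (rule emeasure_lborel_countable)
    hence "measure lborel (cell N i \<inter> Y) = 0" unfolding measure_def by simp
    thus ?thesis using False by simp
  qed
qed

lemma Op_ind_entry:
  assumes N: "N > 0" and g: "grid_union N Y"
  shows "real N * (\<integral>x\<in>cell N i. indicator Y x \<partial>lborel) = (if oc N i \<subseteq> Y then 1 else 0)"
proof -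
  have "(\<lambda>x. indicator (cell N i) x *\<^sub>R indicator Y x) = (indicator (cell N i \<inter> Y) :: real \<Rightarrow> real)"
    by (auto simp: fun_eq_iff indicator_def)
  hence "(\<integral>x\<in>cell N i. indicator Y x \<partial>lborel) = measure lborel (cell N i \<inter> Y)"
    unfolding set_lebesgue_integral_def by simp
  thus ?thesis using Nmeasure_cell_inter[OF N g] by simp
qed


lemma cover:
  assumes c: "condition1 T l Lam a" and x: "x \<in> {0..1}"
  shows "(\<exists>k\<le>l. x = a k) \<or> (\<exists>k<l. a k < x \<and> x < a (Suc k))"
proof -
  have inc: "\<And>k. k < l \<Longrightarrow> a k < a (Suc k)"
  proof -
    fix k assume k: "k < l"
    have e: "a (Suc k) - a k = 1 / real (Lam k)" and L: "Lam k \<ge> 2" using c k unfolding condition1_def by auto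
    have "1 / real (Lam k) > 0" using L by simp
    thus "a k < a (Suc k)" using e by linarith
  qed
  have "\<forall>y. m \<le> l \<longrightarrow> a 0 \<le> y \<longrightarrow> y \<le> a m \<longrightarrow> (\<exists>k\<le>m. y = a k) \<or> (\<exists>k<m. a k < y \<and> y < a (Suc k))" for m
  proof (induction m)
    case 0 then show ?case by auto
  next
    case (Suc m)
    show ?case
    proof (intro allI impI)
      fix y assume h: "Suc m \<le> l" "a 0 \<le> y" "y \<le> a (Suc m)"
      show "(\<exists>k\<le>Suc m. y = a k) \<or> (\<exists>k<Suc m. a k < y \<and> y < a (Suc k))"
      proof (cases "y \<le> a m")
        case True
        with Suc.IH h show ?thesis by (metis Suc_leD le_SucI less_SucI)
      next
        case False
        show ?thesis
        proof (cases "y = a (Suc m)")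
          case True then show ?thesis by blast
        next
          case False2: False
          with False h show ?thesis by (metis lessI linorder_not_le order_le_neq_trans)
        qed
      qed
    qed
  qed
  moreover have "a 0 = 0" "a l = 1" using c unfolding condition1_def by auto
  ultimately show ?thesis using x by auto
qed

lemma fin_preimage:
  assumes c: "condition1 T l Lam a"
  shows "finite {x \<in> {0..1}. T x = y}"
proof -
  have "{x \<in> {0..1}. T x = y} \<subseteq> a ` {..l} \<union> (\<lambda>k. a k + y / real (Lam k)) ` {..<l}"
  proof
    fix x assume x: "x \<in> {x \<in> {0..1}. T x = y}"
    from cover[OF c] x have "(\<exists>k\<le>l. x = a k) \<or> (\<exists>k<l. a k < x \<and> x < a (Suc k))" by auto
    thus "x \<in> a ` {..l} \<union> (\<lambda>k. a k + y / real (Lam k)) ` {..<l}"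
    proof
      assume "\<exists>k\<le>l. x = a k" thus ?thesis by auto
    next
      assume "\<exists>k<l. a k < x \<and> x < a (Suc k)"
      then obtain k where k: "k < l" "a k < x" "x < a (Suc k)" by auto
      have "T x = real (Lam k) * (x - a k)" "Lam k \<ge> 2" using c k unfolding condition1_def by auto
      hence "x = a k + y / real (Lam k)" using x by (simp add: field_simps)
      thus ?thesis using k by auto
    qed
  qed
  thus ?thesis by (rule finite_subset) auto
qed

lemma witness:
  assumes c: "condition1 T l Lam a" and pos: "measure lborel (cell N j \<inter> preim T (cell N i)) \<noteq> 0"
  shows "\<exists>x\<in>oc N j. x \<in> {0..1} \<and> T x \<in> oc N i"
proof (rule ccontr)
  assume nt: "\<not> (\<exists>x\<in>oc N j. x \<in> {0..1} \<and> T x \<in> oc N i)"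
  let ?F = "{real j / real N, real (Suc j) / real N} \<union> {x \<in> {0..1}. T x = real i / real N}
     \<union> {x \<in> {0..1}. T x = real (Suc i) / real N}"
  have "cell N j \<inter> preim T (cell N i) \<subseteq> ?F"
  proof
    fix x assume x: "x \<in> cell N j \<inter> preim T (cell N i)"
    hence x01: "x \<in> {0..1}" "T x \<in> cell N i" unfolding preim_def by auto
    show "x \<in> ?F"
    proof (cases "x \<in> oc N j")
      case True
      hence "T x \<notin> oc N i" using nt x01 by auto
      hence "T x \<in> {real i / real N, real (Suc i) / real N}" using x01(2) cell_oc[of N i] by blast
      thus ?thesis using x01 by auto
    next
      case False
      thus ?thesis using x cell_oc[of N j] by blast
    qed
  qed
  moreover have "finite ?F" using fin_preimage[OF c] by auto
  ultimately have "countable (cell N j \<inter> preim T (cell N i))"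
    by (meson countable_finite finite_subset)
  hence "emeasure lborel (cell N j \<inter> preim T (cell N i)) = 0" by (rule emeasure_lborel_countable)
  hence "measure lborel (cell N j \<inter> preim T (cell N i)) = 0" unfolding measure_def by simp
  thus False using pos by simp
qed

lemma key:
  assumes N: "N > 0" and c: "condition1 T l Lam a" and gX: "grid_union N X"
    and gY: "grid_union N (preim T X)"
    and pos: "Bmat T N j i \<noteq> 0"
  shows "oc N i \<subseteq> X \<longleftrightarrow> oc N j \<subseteq> preim T X"
proof -
  have "measure lborel (cell N j \<inter> preim T (cell N i)) \<noteq> 0" using pos unfolding Bmat_def by auto
  then obtain x where x: "x \<in> oc N j" "x \<in> {0..1}" "T x \<in> oc N i" using witness[OF c] by blast
  show ?thesis
  proof
    assume "oc N i \<subseteq> X"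
    hence "x \<in> preim T X" using x unfolding preim_def by auto
    thus "oc N j \<subseteq> preim T X" using gu_dich[OF N gY, of j] x by auto
  next
    assume "oc N j \<subseteq> preim T X"
    hence "T x \<in> X" using x unfolding preim_def by auto
    thus "oc N i \<subseteq> X" using gu_dich[OF N gX, of i] x by auto
  qed
qed


lemma proj_entry:
  assumes N: "N > 0" and g: "grid_union N Y" and i: "i < N" and j: "j < N"
  shows "proj N Y $$ (i,j) = (if i = j then (if oc N i \<subseteq> Y then 1 else 0) else 0)"
proof -
  have e: "complex_of_real (real N * (\<integral>x\<in>cell N i. indicator Y x \<partial>lborel)) = (if oc N i \<subseteq> Y then 1 else 0)"
    using Op_ind_entry[OF N g, of i] by simp
  have h: "proj N Y $$ (i,j) = (if i = j then complex_of_real (real N * (\<integral>x\<in>cell N i. indicator Y x \<partial>lborel)) else 0)"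
    unfolding proj_def Op_def using i j by simp
  show ?thesis unfolding h e ..
qed

lemma proj_carrier: "proj N Y \<in> carrier_mat N N"
  unfolding proj_def Op_def by auto

lemma inverse_exists:
  assumes U: "U \<in> carrier_mat N N" "unitary_mat U"
  shows "\<exists>B. mat_inverse U = Some B \<and> B * U = 1\<^sub>m N \<and> B \<in> carrier_mat N N"
proof (cases "mat_inverse U")
  case None
  have Ac: "mat_adjoint U \<in> carrier_mat N N" using U(1) unfolding mat_adjoint_def by auto
  have "U \<in> Units (ring_mat TYPE(complex) N ())"
    using U Ac unfolding Units_def ring_mat_def unitary_mat_def by auto
  moreover have "U \<notin> Units (ring_mat TYPE(complex) N ())" by (rule mat_inverse(1)[OF U(1) None])
  ultimately show ?thesis by blast
next
  case (Some B)
  thus ?thesis using mat_inverse(2)[OF U(1) Some] by blast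
qed

theorem proposition2:
  fixes T :: "real \<Rightarrow> real" and l N :: nat and Lam :: "nat \<Rightarrow> nat" and a :: "nat \<Rightarrow> real"
    and U :: "complex mat" and X :: "real set"
  assumes "N > 0"
    and "condition1 T l Lam a"
    and "\<forall>j\<le>l. a j \<in> grid N"
    and "quantization T N U"
    and "grid_union N X"
    and "grid_union N (preim T X)"
  shows "the (mat_inverse U) * proj N X * U = proj N (preim T X)"
proof -
  note N = assms(1) and c = assms(2) and gX = assms(5) and gY = assms(6)
  have Uc: "U \<in> carrier_mat N N" and Uu: "unitary_mat U"
    and Bq: "\<forall>i<N. \<forall>j<N. Bmat T N j i = (cmod (U $$ (i,j)))\<^sup>2"
    using assms(4) unfolding quantization_def by auto
  let ?P = "proj N X" and ?Q = "proj N (preim T X)"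
  have PU: "?P * U = U * ?Q"
  proof (rule eq_matI)
    fix i k assume i: "i < dim_row (U * ?Q)" and k: "k < dim_col (U * ?Q)"
    hence i: "i < N" and k: "k < N" using Uc proj_carrier[of N "preim T X"] by auto
    have "(?P * U) $$ (i,k) = (\<Sum>r<N. ?P $$ (i,r) * U $$ (r,k))"
      using i k Uc proj_carrier[of N X]
      by (auto simp: index_mult_mat scalar_prod_def lessThan_atLeast0 intro!: sum.cong)
    also have "\<dots> = (\<Sum>r<N. if r = i then (if oc N i \<subseteq> X then 1 else 0) * U $$ (i,k) else 0)"
      by (intro sum.cong) (auto simp: proj_entry[OF N gX] i)
    also have "\<dots> = (if oc N i \<subseteq> X then 1 else 0) * U $$ (i,k)"
      using i by (subst sum.delta) auto
    also have "\<dots> = U $$ (i,k) * (if oc N k \<subseteq> preim T X then 1 else 0)"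
    proof (cases "U $$ (i,k) = 0")
      case False
      hence "Bmat T N k i \<noteq> 0" using Bq i k by auto
      hence "oc N i \<subseteq> X \<longleftrightarrow> oc N k \<subseteq> preim T X" by (rule key[OF N c gX gY])
      thus ?thesis by simp
    qed simp
    also have "\<dots> = (\<Sum>r<N. if r = k then U $$ (i,k) * (if oc N k \<subseteq> preim T X then 1 else 0) else 0)"
      using k by (subst sum.delta) auto
    also have "\<dots> = (\<Sum>r<N. U $$ (i,r) * ?Q $$ (r,k))"
      by (intro sum.cong) (auto simp: proj_entry[OF N gY] k)
    also have "\<dots> = (U * ?Q) $$ (i,k)"
      using i k Uc proj_carrier[of N "preim T X"]
      by (auto simp: index_mult_mat scalar_prod_def lessThan_atLeast0 intro!: sum.cong)
    finally show "(?P * U) $$ (i,k) = (U * ?Q) $$ (i,k)" .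
  next
    show "dim_row (?P * U) = dim_row (U * ?Q)" "dim_col (?P * U) = dim_col (U * ?Q)"
      using Uc proj_carrier[of N X] proj_carrier[of N "preim T X"] by auto
  qed
  obtain B where B: "mat_inverse U = Some B" "B * U = 1\<^sub>m N" "B \<in> carrier_mat N N"
    using inverse_exists[OF Uc Uu] by blast
  have Pc: "?P \<in> carrier_mat N N" and Qc: "?Q \<in> carrier_mat N N" using proj_carrier by auto
  have "B * ?P * U = B * (?P * U)" using B(3) Pc Uc by (rule assoc_mult_mat)
  also have "\<dots> = B * (U * ?Q)" using PU by simp
  also have "\<dots> = (B * U) * ?Q" using B(3) Uc Qc by (simp add: assoc_mult_mat)
  also have "\<dots> = ?Q" using B(2) Qc by simp
  finally show ?thesis using B(1) by simp
qed

end
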